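(* Let $\mathcal{X}$ and $\mathcal{H}$ be finite sets and let $P_\mathcal{D}$ be a probability distribution on $\mathcal{X}$ (the data distribution). Let $\{P_{\theta_I}(\mathbf{x}|\mathbf{h})\}_{\theta_I\in\Theta_I}$ be a family of conditional distributions of $\mathbf{x}\in\mathcal{X}$ given $\mathbf{h}\in\mathcal{H}$ and $\{P_{\theta_J}(\mathbf{h})\}_{\theta_J\in\Theta_J}$ a family of distributions on $\mathcal{H}$, and for $\theta=(\theta_I,\theta_J)$ let $P_\theta(\mathbf{x})=\sum_{\mathbf{h}}P_{\theta_I}(\mathbf{x}|\mathbf{h})P_{\theta_J}(\mathbf{h})$ and $L(\theta)=\mathbb{E}_{\mathbf{x}\sim P_\mathcal{D}}[\log P_\theta(\mathbf{x})]$. Let $\theta^\ast=(\theta_I^\ast,\theta_J^\ast)$ be a maximizer of $L$. Suppose $(\hat\theta_I,\hat q)$ is a maximizer of $$(\theta_I,q)\mapsto \mathbb{E}_{\mathbf{x}\sim P_\mathcal{D}}\Big[\log \sum_{\mathbf{h}} P_{\theta_I}(\mathbf{x}|\mathbf{h})\, q_\mathcal{D}(\mathbf{h})\Big],$$ where $\theta_I$ ranges over $\Theta_I$ and $q$ ranges over all conditional probability distributions $q(\mathbf{h}|\mathbf{x})$ on $\mathcal{H}$ given $\mathbf{x}\in\mathcal{X}$, and $q_\mathcal{D}(\mathbf{h}):=\sum_{\tilde{\mathbf{x}}}q(\mathbf{h}|\tilde{\mathbf{x}})P_\mathcal{D}(\tilde{\mathbf{x}})$. Let $\hat q_\mathcal{D}$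 be the distribution on $\mathcal{H}$ associated with $\hat q$, and assume the maximal value above is finite. Then: (1) If there exists $\hat\theta_J\in\Theta_J$ with $P_{\hat\theta_J}(\mathbf{h})=\hat q_\mathcal{D}(\mathbf{h})$ for all $\mathbf{h}$, then $(\hat\theta_I,\hat\theta_J)$ is a global maximizer of $L$; in particular if the maximizer of $L$ is unique then $(\hat\theta_I,\hat\theta_J)=(\theta_I^\ast,\theta_J^\ast)$. (2) For every $\theta_J\in\Theta_J$, $$L(\theta_I^\ast,\theta_J^\ast)-L(\hat\theta_I,\theta_J)\le \mathrm{KL}\big(\hat q_\mathcal{D}\,\|\,P_{\theta_J}\big).$$
   Context: $\mathrm{KL}(p\|r)=\sum_{\mathbf{h}}p(\mathbf{h})\log\frac{p(\mathbf{h})}{r(\mathbf{h})}$ denotes the Kullback–Leibler divergence (possibly $+\infty$). The parameter $\hat\theta_I$ is called the best optimistic lower layer (BOLL). *)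

theory Defs
  imports "HOL-Analysis.Analysis"
begin

definition elog :: "real \<Rightarrow> ereal" where
  "elog t = (if t > 0 then ereal (ln t) else -\<infinity>)"

text \<open>Expectation of an ereal-valued function under a finite distribution p
  (terms with p x = 0 contribute 0, i.e. the convention 0 log 0 = 0).\<close>
definition expect :: "('x::finite \<Rightarrow> real) \<Rightarrow> ('x \<Rightarrow> ereal) \<Rightarrow> ereal" where
  "expect p f = (\<Sum>x\<in>{x. p x \<noteq> 0}. ereal (p x) * f x)"

definition is_distr :: "('a::finite \<Rightarrow> real) \<Rightarrow> bool" where
  "is_distr p \<longleftrightarrow> (\<forall>a. 0 \<le> p a) \<and> (\<Sum>a\<in>UNIV. p a) = 1"

definition KL :: "('h::finite \<Rightarrow> real) \<Rightarrow> ('h \<Rightarrow> real) \<Rightarrow> ereal" where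
  "KL p r = (\<Sum>h\<in>UNIV. if p h = 0 then 0 else if r h = 0 then \<infinity>
                         else ereal (p h * ln (p h / r h)))"

text \<open>Marginal model P_theta(x) = sum_h P_thetaI(x|h) P_thetaJ(h);
  cond tI x h stands for P_tI(x|h), prior tJ h for P_tJ(h).\<close>
definition marg :: "('a \<Rightarrow> 'x \<Rightarrow> 'h::finite \<Rightarrow> real) \<Rightarrow> 'a \<Rightarrow> ('h \<Rightarrow> real) \<Rightarrow> 'x \<Rightarrow> real" where
  "marg cond tI r x = (\<Sum>h\<in>UNIV. cond tI x h * r h)"

definition loglik :: "('x::finite \<Rightarrow> real) \<Rightarrow> ('a \<Rightarrow> 'x \<Rightarrow> 'h::finite \<Rightarrow> real)
    \<Rightarrow> ('b \<Rightarrow> 'h \<Rightarrow> real) \<Rightarrow> 'a \<Rightarrow> 'b \<Rightarrow> ereal" where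
  "loglik PD cond prior tI tJ = expect PD (\<lambda>x. elog (marg cond tI (prior tJ) x))"

text \<open>Aggregated posterior q_D(h) = sum_x q(h|x) P_D(x); q x h stands for q(h|x).\<close>
definition aggr :: "('x::finite \<Rightarrow> real) \<Rightarrow> ('x \<Rightarrow> 'h \<Rightarrow> real) \<Rightarrow> 'h \<Rightarrow> real" where
  "aggr PD q h = (\<Sum>x\<in>UNIV. q x h * PD x)"

definition boll_obj :: "('x::finite \<Rightarrow> real) \<Rightarrow> ('a \<Rightarrow> 'x \<Rightarrow> 'h::finite \<Rightarrow> real)
    \<Rightarrow> 'a \<Rightarrow> ('x \<Rightarrow> 'h \<Rightarrow> real) \<Rightarrow> ereal" where
  "boll_obj PD cond tI q = expect PD (\<lambda>x. elog (marg cond tI (aggr PD q) x))"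

end

theory Submission imports Defs begin

lemma jensen_ln:
  fixes w z :: "'h \<Rightarrow> real"
  assumes fin: "finite A" and wnn: "\<And>h. h \<in> A \<Longrightarrow> w h \<ge> 0" and ws: "(\<Sum>h\<in>A. w h) = 1"
    and zp: "\<And>h. h \<in> A \<Longrightarrow> w h > 0 \<Longrightarrow> z h > 0"
  shows "0 < (\<Sum>h\<in>A. w h * z h) \<and> (\<Sum>h\<in>A. w h * ln (z h)) \<le> ln (\<Sum>h\<in>A. w h * z h)"
proof -
  define Z where "Z = (\<Sum>h\<in>A. w h * z h)"
  have tnn: "\<And>h. h \<in> A \<Longrightarrow> w h * z h \<ge> 0"
    using wnn zp by (metis less_eq_real_def mult_eq_0_iff mult_pos_pos)
  obtain h0 where h0: "h0 \<in> A" "w h0 > 0"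
  proof -
    have "\<not> (\<forall>h\<in>A. w h \<le> 0)"
    proof
      assume "\<forall>h\<in>A. w h \<le> 0"
      then have "(\<Sum>h\<in>A. w h) \<le> 0" by (simp add: sum_nonpos)
      with ws show False by simp
    qed
    then show ?thesis using wnn that by force
  qed
  have "w h0 * z h0 \<le> Z" unfolding Z_def
    by (rule member_le_sum[OF h0(1)]) (use tnn fin in auto)
  moreover have "w h0 * z h0 > 0" using h0 zp by simp
  ultimately have Zp: "Z > 0" by linarith
  have le: "w h * (ln (z h) - ln Z) \<le> w h * (z h / Z - 1)" if "h \<in> A" for h
  proof (cases "w h > 0")
    case True
    then have "z h > 0" using zp that by auto
    then have "ln (z h) - ln Z = ln (z h / Z)" using Zp by (simp add: ln_div)
    also have "\<dots> \<le> z h / Z - 1" using \<open>z h > 0\<close> Zp by (intro ln_le_minus_one) simp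
    finally show ?thesis using True by (simp add: mult_left_mono)
  next
    case False
    then have "w h = 0" using wnn that by force
    then show ?thesis by simp
  qed
  have "(\<Sum>h\<in>A. w h * ln (z h)) - ln Z = (\<Sum>h\<in>A. w h * (ln (z h) - ln Z))"
    by (simp add: right_diff_distrib sum_subtractf sum_distrib_right[symmetric] ws)
  also have "\<dots> \<le> (\<Sum>h\<in>A. w h * (z h / Z - 1))" by (rule sum_mono) (rule le)
  also have "\<dots> = (\<Sum>h\<in>A. w h * z h / Z) - (\<Sum>h\<in>A. w h)"
    by (simp add: right_diff_distrib sum_subtractf)
  also have "\<dots> = Z / Z - 1"
    by (simp add: ws Z_def sum_divide_distrib[symmetric])
  also have "\<dots> = 0" using Zp by simp
  finally show ?thesis using Zp Z_def by simp
qed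

lemma gibbs_eq:
  fixes r r' :: "'h::finite \<Rightarrow> real"
  assumes rnn: "\<And>h. r h \<ge> 0" and r'nn: "\<And>h. r' h \<ge> 0"
    and rs: "(\<Sum>h\<in>UNIV. r h) = 1" and r's: "(\<Sum>h\<in>UNIV. r' h) = 1"
    and supp: "\<And>h. r' h > 0 \<Longrightarrow> r h > 0"
    and le: "(\<Sum>h\<in>UNIV. r' h * ln (r' h / r h)) \<le> 0"
  shows "r' = r"
proof -
  define e where "e h = r' h * ln (r' h / r h) - r' h + r h" for h
  have enn: "e h \<ge> 0" for h
  proof (cases "r' h > 0")
    case True
    then have rp: "r h > 0" using supp by auto
    have "ln (r h / r' h) \<le> r h / r' h - 1" using rp True by (intro ln_le_minus_one) simp
    moreover have "ln (r' h / r h) = - ln (r h / r' h)" using rp True by (simp add: ln_div)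
    ultimately have "1 - r h / r' h \<le> ln (r' h / r h)" by linarith
    then have "r' h * (1 - r h / r' h) \<le> r' h * ln (r' h / r h)"
      using True by (intro mult_left_mono) auto
    moreover have "r' h * (1 - r h / r' h) = r' h - r h" using True by (simp add: field_simps)
    ultimately show ?thesis unfolding e_def by linarith
  next
    case False
    then have "r' h = 0" using r'nn by (metis less_eq_real_def)
    then show ?thesis unfolding e_def using rnn by simp
  qed
  have "(\<Sum>h\<in>UNIV. e h) = (\<Sum>h\<in>UNIV. r' h * ln (r' h / r h))"
    unfolding e_def by (simp add: sum.distrib sum_subtractf rs r's)
  then have "(\<Sum>h\<in>UNIV. e h) = 0" using le enn by (smt (verit) sum_nonneg)
  then have e0: "\<And>h. e h = 0" using enn by (simp add: sum_nonneg_eq_0_iff)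
  show ?thesis
  proof
    fix h
    show "r' h = r h"
    proof (cases "r' h > 0")
      case True
      then have rp: "r h > 0" using supp by auto
      define y where "y = r h / r' h"
      have yp: "y > 0" using rp True y_def by simp
      have "ln (r' h / r h) = - ln y" using rp True y_def by (simp add: ln_div)
      with e0[of h] have "r' h * (- ln y) = r' h - r h" unfolding e_def by simp
      moreover have "r' h - r h = r' h * (1 - y)" using True y_def by (simp add: field_simps)
      ultimately have "r' h * (- ln y) = r' h * (1 - y)" by simp
      then have "- ln y = 1 - y" using True by (metis mult_left_cancel less_irrefl)
      then have "ln y = y - 1" by simp
      then have "y = 1" using ln_eq_minus_one yp by blast
      then show ?thesis using True y_def by simp
    next
      case False
      then have "r' h = 0" using r'nn by (metis less_eq_real_def)
      then show ?thesis using e0[of h] unfolding e_def by simp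
    qed
  qed
qed

lemma marg_bound:
  fixes c r s :: "'h::finite \<Rightarrow> real"
  assumes cnn: "\<And>h. c h \<ge> 0" and rnn: "\<And>h. r h \<ge> 0" and snn: "\<And>h. s h \<ge> 0"
    and M: "(\<Sum>h\<in>UNIV. c h * r h) > 0"
    and supp: "\<And>h. c h * r h > 0 \<Longrightarrow> s h > 0"
  shows "(\<Sum>h\<in>UNIV. c h * s h) > 0 \<and>
    (\<Sum>h\<in>UNIV. (c h * r h / (\<Sum>h\<in>UNIV. c h * r h)) * ln (s h / r h))
      \<le> ln (\<Sum>h\<in>UNIV. c h * s h) - ln (\<Sum>h\<in>UNIV. c h * r h)"
proof -
  define M where "M = (\<Sum>h\<in>UNIV. c h * r h)"
  define w where "w h = c h * r h / M" for h
  define z where "z h = s h / r h" for h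
  have Mp: "M > 0" using M M_def by simp
  have ws: "(\<Sum>h\<in>UNIV. w h) = 1" unfolding w_def using Mp
    by (simp add: sum_divide_distrib[symmetric] M_def)
  have wnn: "w h \<ge> 0" for h unfolding w_def using cnn rnn Mp by simp
  have zp: "w h > 0 \<Longrightarrow> z h > 0" for h
  proof -
    assume "w h > 0"
    then have cr: "c h * r h > 0" unfolding w_def using Mp by (simp add: zero_less_divide_iff)
    then have "r h > 0" using cnn rnn by (metis less_eq_real_def mult_zero_right)
    then show "z h > 0" unfolding z_def using supp[OF cr] by simp
  qed
  from jensen_ln[of UNIV w z] ws wnn zp
  have J: "0 < (\<Sum>h\<in>UNIV. w h * z h)" "(\<Sum>h\<in>UNIV. w h * ln (z h)) \<le> ln (\<Sum>h\<in>UNIV. w h * z h)"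
    by auto
  have "(\<Sum>h\<in>UNIV. w h * z h) \<le> (\<Sum>h\<in>UNIV. c h * s h / M)"
  proof (rule sum_mono)
    fix h
    show "w h * z h \<le> c h * s h / M"
    proof (cases "r h = 0")
      case True then show ?thesis unfolding w_def z_def using cnn snn Mp by simp
    next
      case False then show ?thesis unfolding w_def z_def by (simp add: field_simps)
    qed
  qed
  also have "\<dots> = (\<Sum>h\<in>UNIV. c h * s h) / M" by (simp add: sum_divide_distrib)
  finally have le: "(\<Sum>h\<in>UNIV. w h * z h) \<le> (\<Sum>h\<in>UNIV. c h * s h) / M" .
  with J(1) have Sp: "(\<Sum>h\<in>UNIV. c h * s h) / M > 0" by linarith
  then have Sp': "(\<Sum>h\<in>UNIV. c h * s h) > 0" using Mp by (simp add: zero_less_divide_iff)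
  have "ln (\<Sum>h\<in>UNIV. w h * z h) \<le> ln ((\<Sum>h\<in>UNIV. c h * s h) / M)"
    using le J(1) by simp
  also have "\<dots> = ln (\<Sum>h\<in>UNIV. c h * s h) - ln M" using Sp' Mp by (simp add: ln_div)
  finally show ?thesis using J(2) Sp' unfolding w_def z_def M_def by simp
qed

lemma sum_minf:
  fixes f :: "'a \<Rightarrow> ereal"
  assumes "finite A" "\<And>i. i \<in> A \<Longrightarrow> f i \<noteq> \<infinity>" "i0 \<in> A" "f i0 = -\<infinity>"
  shows "sum f A = -\<infinity>"
  using assms
proof (induction A rule: finite_induct)
  case empty then show ?case by simp
next
  case (insert x A)
  show ?case
  proof (cases "x = i0")
    case True
    have "sum f A \<noteq> \<infinity>" using insert by (simp add: sum_Pinfty)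
    then show ?thesis using insert True by simp
  next
    case False
    then have "sum f A = -\<infinity>" using insert by auto
    moreover have "f x \<noteq> \<infinity>" using insert by auto
    ultimately show ?thesis using insert by simp
  qed
qed

lemma expect_real:
  assumes "\<And>x. PD x \<noteq> 0 \<Longrightarrow> m x > 0"
  shows "expect PD (\<lambda>x. elog (m x)) = ereal (\<Sum>x\<in>{x. PD x \<noteq> 0}. PD x * ln (m x))"
proof -
  have "expect PD (\<lambda>x. elog (m x)) = (\<Sum>x\<in>{x. PD x \<noteq> 0}. ereal (PD x * ln (m x)))"
    unfolding expect_def by (rule sum.cong) (use assms in \<open>auto simp: elog_def\<close>)
  then show ?thesis by simp
qed

lemma expect_pos:
  fixes PD :: "'x::finite \<Rightarrow> real"
  assumes nn: "\<And>x. PD x \<ge> 0" and ne: "expect PD (\<lambda>x. elog (m x)) \<noteq> -\<infinity>" and x: "PD x \<noteq> 0"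
  shows "m x > 0"
proof (rule ccontr)
  assume "\<not> m x > 0"
  have "expect PD (\<lambda>x. elog (m x)) = -\<infinity>" unfolding expect_def
  proof (rule sum_minf[of _ _ x])
    fix i assume "i \<in> {x. PD x \<noteq> 0}"
    then have "PD i > 0" using nn[of i] by simp
    then show "ereal (PD i) * elog (m i) \<noteq> \<infinity>" by (simp add: elog_def)
  next
    have "PD x > 0" using nn[of x] x by simp
    then show "ereal (PD x) * elog (m x) = -\<infinity>" using \<open>\<not> m x > 0\<close> by (simp add: elog_def)
  qed (use x in auto)
  with ne show False by simp
qed

theorem theorem1:
  fixes PD :: "'x::finite \<Rightarrow> real"
    and cond :: "'a \<Rightarrow> 'x \<Rightarrow> 'h::finite \<Rightarrow> real"
    and prior :: "'b \<Rightarrow> 'h \<Rightarrow> real"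
    and ThI :: "'a set" and ThJ :: "'b set"
    and tIs :: 'a and tJs :: 'b and tIh :: 'a and qh :: "'x \<Rightarrow> 'h \<Rightarrow> real"
  assumes PD: "is_distr PD"
    and cond_distr: "\<And>tI h. tI \<in> ThI \<Longrightarrow> is_distr (\<lambda>x. cond tI x h)"
    and prior_distr: "\<And>tJ. tJ \<in> ThJ \<Longrightarrow> is_distr (prior tJ)"
    and star_mem: "tIs \<in> ThI" "tJs \<in> ThJ"
    and star_max: "\<And>tI tJ. tI \<in> ThI \<Longrightarrow> tJ \<in> ThJ \<Longrightarrow>
                     loglik PD cond prior tI tJ \<le> loglik PD cond prior tIs tJs"
    and hat_mem: "tIh \<in> ThI" "\<And>x. is_distr (qh x)"
    and hat_max: "\<And>tI q. tI \<in> ThI \<Longrightarrow> (\<forall>x. is_distr (q x)) \<Longrightarrow>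
                     boll_obj PD cond tI q \<le> boll_obj PD cond tIh qh"
    and finite_val: "\<bar>boll_obj PD cond tIh qh\<bar> \<noteq> \<infinity>"
  shows "(\<forall>tJh\<in>ThJ. (\<forall>h. prior tJh h = aggr PD qh h) \<longrightarrow>
            (\<forall>tI\<in>ThI. \<forall>tJ\<in>ThJ. loglik PD cond prior tI tJ \<le> loglik PD cond prior tIh tJh)
          \<and> ((\<forall>tI\<in>ThI. \<forall>tJ\<in>ThJ. loglik PD cond prior tI tJ = loglik PD cond prior tIs tJs
                 \<longrightarrow> (tI, tJ) = (tIs, tJs))
             \<longrightarrow> (tIh, tJh) = (tIs, tJs)))
       \<and> (\<forall>tJ\<in>ThJ. loglik PD cond prior tIs tJs - loglik PD cond prior tIh tJ
                     \<le> KL (aggr PD qh) (prior tJ))"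
proof -
  have PDnn: "\<And>x. PD x \<ge> 0" and PDs: "(\<Sum>x\<in>UNIV. PD x) = 1"
    using PD unfolding is_distr_def by auto
  have aggr_const: "aggr PD (\<lambda>x. s) = s" for s :: "'h \<Rightarrow> real"
  proof
    fix h
    have "aggr PD (\<lambda>x. s) h = s h * (\<Sum>x\<in>UNIV. PD x)"
      unfolding aggr_def by (simp add: sum_distrib_left)
    then show "aggr PD (\<lambda>x. s) h = s h" using PDs by simp
  qed
  have ll_eq: "loglik PD cond prior tI tJ = boll_obj PD cond tI (\<lambda>x. prior tJ)" for tI tJ
    unfolding loglik_def boll_obj_def aggr_const by simp
  have ll_le: "loglik PD cond prior tI tJ \<le> boll_obj PD cond tIh qh"
    if "tI \<in> ThI" "tJ \<in> ThJ" for tI tJ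
    using hat_max[of tI "\<lambda>x. prior tJ"] prior_distr[OF that(2)] that(1) ll_eq by simp
  have part1: "\<forall>tJh\<in>ThJ. (\<forall>h. prior tJh h = aggr PD qh h) \<longrightarrow>
            (\<forall>tI\<in>ThI. \<forall>tJ\<in>ThJ. loglik PD cond prior tI tJ \<le> loglik PD cond prior tIh tJh)
          \<and> ((\<forall>tI\<in>ThI. \<forall>tJ\<in>ThJ. loglik PD cond prior tI tJ = loglik PD cond prior tIs tJs
                 \<longrightarrow> (tI, tJ) = (tIs, tJs))
             \<longrightarrow> (tIh, tJh) = (tIs, tJs))"
  proof (rule ballI, rule impI)
    fix tJh assume tJh: "tJh \<in> ThJ" and eq: "\<forall>h. prior tJh h = aggr PD qh h"
    then have "prior tJh = aggr PD qh" by auto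
    then have Leq: "loglik PD cond prior tIh tJh = boll_obj PD cond tIh qh"
      unfolding loglik_def boll_obj_def by simp
    have A: "\<forall>tI\<in>ThI. \<forall>tJ\<in>ThJ. loglik PD cond prior tI tJ \<le> loglik PD cond prior tIh tJh"
      using ll_le Leq by simp
    moreover {
    assume uniq: "\<forall>tI\<in>ThI. \<forall>tJ\<in>ThJ. loglik PD cond prior tI tJ = loglik PD cond prior tIs tJs
                 \<longrightarrow> (tI, tJ) = (tIs, tJs)"
    have "loglik PD cond prior tIh tJh \<le> loglik PD cond prior tIs tJs"
      using star_max[OF hat_mem(1) tJh] .
    moreover have "loglik PD cond prior tIs tJs \<le> loglik PD cond prior tIh tJh"
      using ll_le[OF star_mem] Leq by simp
    ultimately have "(tIh, tJh) = (tIs, tJs)" using uniq hat_mem(1) tJh by auto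
    }
    ultimately show "(\<forall>tI\<in>ThI. \<forall>tJ\<in>ThJ. loglik PD cond prior tI tJ \<le> loglik PD cond prior tIh tJh)
          \<and> ((\<forall>tI\<in>ThI. \<forall>tJ\<in>ThJ. loglik PD cond prior tI tJ = loglik PD cond prior tIs tJs
                 \<longrightarrow> (tI, tJ) = (tIs, tJs))
             \<longrightarrow> (tIh, tJh) = (tIs, tJs))" by blast
  qed
  define c where "c x h = cond tIh x h" for x h
  define r where "r = aggr PD qh"
  define S where "S = {x. PD x \<noteq> 0}"
  have marg_c: "marg cond tIh s x = (\<Sum>h\<in>UNIV. c x h * s h)" for s x
    unfolding marg_def c_def by simp
  have cnn: "c x h \<ge> 0" for x h
    using cond_distr[OF hat_mem(1), of h] unfolding is_distr_def c_def by auto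
  have rnn: "r h \<ge> 0" for h
    unfolding r_def aggr_def using hat_mem(2) PDnn unfolding is_distr_def
    by (intro sum_nonneg) auto
  have rs: "(\<Sum>h\<in>UNIV. r h) = 1"
  proof -
    have "(\<Sum>h\<in>UNIV. r h) = (\<Sum>x\<in>UNIV. PD x * (\<Sum>h\<in>UNIV. qh x h))"
      unfolding r_def aggr_def by (subst sum.swap) (simp add: sum_distrib_left mult.commute)
    also have "\<dots> = (\<Sum>x\<in>UNIV. PD x)" using hat_mem(2) unfolding is_distr_def by simp
    finally show ?thesis using PDs by simp
  qed
  have Bne: "expect PD (\<lambda>x. elog (marg cond tIh r x)) \<noteq> -\<infinity>"
    using finite_val unfolding boll_obj_def r_def by auto
  have Mpos: "(\<Sum>h\<in>UNIV. c x h * r h) > 0" if "PD x \<noteq> 0" for x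
    using expect_pos[OF PDnn Bne that] marg_c by simp
  define F where "F s = (\<Sum>x\<in>S. PD x * ln (\<Sum>h\<in>UNIV. c x h * s h))" for s
  have obj_val: "expect PD (\<lambda>x. elog (marg cond tIh s x)) = ereal (F s)"
    if "\<And>x. PD x \<noteq> 0 \<Longrightarrow> (\<Sum>h\<in>UNIV. c x h * s h) > 0" for s
    unfolding F_def S_def marg_c by (rule expect_real) (use that in auto)
  have Bval: "boll_obj PD cond tIh qh = ereal (F r)"
    unfolding boll_obj_def r_def[symmetric] by (rule obj_val) (use Mpos in auto)
  define r' where "r' h = (\<Sum>x\<in>S. PD x * (c x h * r h / (\<Sum>h\<in>UNIV. c x h * r h)))" for h
  have gen: "(\<forall>x. PD x \<noteq> 0 \<longrightarrow> (\<Sum>h\<in>UNIV. c x h * s h) > 0) \<and>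
      (\<Sum>h\<in>UNIV. r' h * ln (s h / r h)) \<le> F s - F r"
    if snn: "\<And>h. s h \<ge> 0" and supp: "\<And>x h. PD x \<noteq> 0 \<Longrightarrow> c x h * r h > 0 \<Longrightarrow> s h > 0" for s
  proof -
    have mb: "(\<Sum>h\<in>UNIV. c x h * s h) > 0 \<and>
      (\<Sum>h\<in>UNIV. (c x h * r h / (\<Sum>h\<in>UNIV. c x h * r h)) * ln (s h / r h))
      \<le> ln (\<Sum>h\<in>UNIV. c x h * s h) - ln (\<Sum>h\<in>UNIV. c x h * r h)" if "PD x \<noteq> 0" for x
      by (rule marg_bound) (use cnn rnn snn Mpos[OF that] supp[OF that] in auto)
    have "(\<Sum>h\<in>UNIV. r' h * ln (s h / r h))
        = (\<Sum>x\<in>S. PD x * (\<Sum>h\<in>UNIV. (c x h * r h / (\<Sum>h\<in>UNIV. c x h * r h)) * ln (s h / r h)))"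
      unfolding r'_def sum_distrib_right sum_distrib_left by (subst sum.swap) (simp add: mult.assoc)
    also have "\<dots> \<le> (\<Sum>x\<in>S. PD x * (ln (\<Sum>h\<in>UNIV. c x h * s h) - ln (\<Sum>h\<in>UNIV. c x h * r h)))"
      by (rule sum_mono, rule mult_left_mono) (use mb PDnn in \<open>auto simp: S_def\<close>)
    also have "\<dots> = F s - F r" unfolding F_def by (simp add: right_diff_distrib sum_subtractf)
    finally show ?thesis using mb by auto
  qed
  have r'nn: "r' h \<ge> 0" for h
    unfolding r'_def using PDnn cnn rnn by (intro sum_nonneg mult_nonneg_nonneg divide_nonneg_nonneg) auto
  have r's: "(\<Sum>h\<in>UNIV. r' h) = 1"
  proof -
    have "(\<Sum>h\<in>UNIV. r' h) = (\<Sum>x\<in>S. \<Sum>h\<in>UNIV. PD x * (c x h * r h / (\<Sum>h\<in>UNIV. c x h * r h)))"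
      unfolding r'_def by (rule sum.swap)
    also have "\<dots> = (\<Sum>x\<in>S. PD x)"
    proof (rule sum.cong)
      fix x assume "x \<in> S"
      then have "(\<Sum>h\<in>UNIV. c x h * r h) > 0" using Mpos S_def by auto
      then show "(\<Sum>h\<in>UNIV. PD x * (c x h * r h / (\<Sum>h\<in>UNIV. c x h * r h))) = PD x"
        by (simp add: sum_distrib_left[symmetric] sum_divide_distrib[symmetric])
    qed simp
    also have "\<dots> = (\<Sum>x\<in>UNIV. PD x)" by (rule sum.mono_neutral_left) (auto simp: S_def)
    finally show ?thesis using PDs by simp
  qed
  have r'supp: "r' h > 0" if "PD x \<noteq> 0" "c x h * r h > 0" for x h
  proof -
    have "PD x * (c x h * r h / (\<Sum>h\<in>UNIV. c x h * r h)) \<le> r' h"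
      unfolding r'_def by (rule member_le_sum)
        (use that PDnn cnn rnn in \<open>auto simp: S_def intro!: mult_nonneg_nonneg divide_nonneg_nonneg sum_nonneg\<close>)
    moreover have "PD x * (c x h * r h / (\<Sum>h\<in>UNIV. c x h * r h)) > 0"
      using that Mpos[OF that(1)] PDnn[of x] by simp
    ultimately show ?thesis by linarith
  qed
  have r'r: "r h > 0" if "r' h > 0" for h
  proof (rule ccontr)
    assume "\<not> r h > 0"
    then have "r h = 0" using rnn[of h] by simp
    then have "r' h = 0" unfolding r'_def by simp
    with that show False by simp
  qed
  have gr': "(\<forall>x. PD x \<noteq> 0 \<longrightarrow> (\<Sum>h\<in>UNIV. c x h * r' h) > 0) \<and>
      (\<Sum>h\<in>UNIV. r' h * ln (r' h / r h)) \<le> F r' - F r"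
    by (rule gen) (use r'nn r'supp in auto)
  have "is_distr r'" unfolding is_distr_def using r'nn r's by auto
  then have "boll_obj PD cond tIh (\<lambda>x. r') \<le> boll_obj PD cond tIh qh"
    using hat_max[OF hat_mem(1)] by simp
  moreover have "boll_obj PD cond tIh (\<lambda>x. r') = ereal (F r')"
    unfolding boll_obj_def aggr_const by (rule obj_val) (use gr' in auto)
  ultimately have "F r' \<le> F r" using Bval by simp
  with gr' have "(\<Sum>h\<in>UNIV. r' h * ln (r' h / r h)) \<le> 0" by simp
  then have r'eq: "r' = r" by (intro gibbs_eq) (use rnn r'nn rs r's r'r in auto)
  have part2: "\<forall>tJ\<in>ThJ. loglik PD cond prior tIs tJs - loglik PD cond prior tIh tJ
                     \<le> KL (aggr PD qh) (prior tJ)"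
  proof
    fix tJ assume tJ: "tJ \<in> ThJ"
    define p where "p = prior tJ"
    have pnn: "p h \<ge> 0" for h using prior_distr[OF tJ] unfolding p_def is_distr_def by auto
    show "loglik PD cond prior tIs tJs - loglik PD cond prior tIh tJ \<le> KL (aggr PD qh) (prior tJ)"
    proof (cases "KL r p = \<infinity>")
      case True then show ?thesis unfolding r_def p_def by simp
    next
      case False
      have psupp: "p h > 0" if "r h > 0" for h
      proof (rule ccontr)
        assume "\<not> p h > 0"
        then have "p h = 0" using pnn[of h] by simp
        then have "KL r p = \<infinity>" unfolding KL_def using that
          by (subst sum_Pinfty) (auto intro!: exI[of _ h])
        with False show False by simp
      qed
      define K where "K = (\<Sum>h\<in>UNIV. if r h = 0 then 0 else r h * ln (r h / p h))"
      have KLv: "KL r p = ereal K"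
      proof -
        have "KL r p = (\<Sum>h\<in>UNIV. ereal (if r h = 0 then 0 else r h * ln (r h / p h)))"
          unfolding KL_def
        proof (rule sum.cong)
          fix h
          show "(if r h = 0 then 0 else if p h = 0 then \<infinity> else ereal (r h * ln (r h / p h)))
             = ereal (if r h = 0 then 0 else r h * ln (r h / p h))"
            using psupp[of h] rnn[of h] by (cases "r h = 0") auto
        qed simp
        then show ?thesis unfolding K_def by simp
      qed
      have gp: "(\<forall>x. PD x \<noteq> 0 \<longrightarrow> (\<Sum>h\<in>UNIV. c x h * p h) > 0) \<and>
          (\<Sum>h\<in>UNIV. r' h * ln (p h / r h)) \<le> F p - F r"
      proof (rule gen)
        fix x h assume "PD x \<noteq> 0" "c x h * r h > 0"
        then have "r h > 0" using cnn[of x h] rnn[of h] by (metis less_eq_real_def mult_zero_right)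
        then show "p h > 0" by (rule psupp)
      qed (rule pnn)
      have "(\<Sum>h\<in>UNIV. r h * ln (p h / r h)) = - K"
        unfolding K_def sum_negf[symmetric]
      proof (rule sum.cong)
        fix h
        show "r h * ln (p h / r h) = - (if r h = 0 then 0 else r h * ln (r h / p h))"
        proof (cases "r h = 0")
          case False
          then have "r h > 0" using rnn[of h] by simp
          then show ?thesis using psupp[of h] False by (simp add: ln_div algebra_simps)
        qed simp
      qed simp
      with gp r'eq have FK: "F r - F p \<le> K" by simp
      have Lp: "loglik PD cond prior tIh tJ = ereal (F p)"
        unfolding loglik_def p_def[symmetric] by (rule obj_val) (use gp in auto)
      have Ls: "loglik PD cond prior tIs tJs \<le> ereal (F r)"
        using ll_le[OF star_mem] Bval by simp
      have "loglik PD cond prior tIs tJs - loglik PD cond prior tIh tJ \<le> ereal K"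
        unfolding Lp using Ls FK
        by (cases "loglik PD cond prior tIs tJs") auto
      then show ?thesis using KLv unfolding r_def p_def by simp
    qed
  qed
  show ?thesis using part1 part2 by blast
qed

end
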